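(* Let $n\ge 1$. If the Zeckendorf game on $n$, starting from $\{F_1^n\}$, can be played to the Zeckendorf decomposition of $n$ using only splitting moves and $C_1$ moves, then $n=F_k-1$ for some $k\ge 2$.
   Context: Fibonacci numbers are indexed by $F_1=1$, $F_2=2$, $F_{i+1}=F_i+F_{i-1}$. A game state is a finite multiset of Fibonacci numbers (tracked by index); $\{F_1^n\}$ denotes $n$ copies of $F_1$. The legal moves are: $C_1$: replace $F_1,F_1$ by $F_2$; for $i\ge 2$, $C_i$: replace $F_{i-1},F_i$ by $F_{i+1}$ (a "combining move"); $S_2$: replace $F_2,F_2$ by $F_1,F_3$; for $i\ge 3$, $S_i$: replace $F_i,F_i$ by $F_{i-2},F_{i+1}$ (a "splitting move"). The game on $n$ starts at $\{F_1^n\}$ and ends when no legal move is available, which happens exactly at the Zeckendorf decomposition of $n$ (the unique representation of $n$ as a sum of $F_i$'s with distinct, pairwise non-consecutive indices). *)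

theory Defs
  imports Main "HOL-Library.Multiset"
begin

text \<open>Fibonacci numbers indexed F 1 = 1, F 2 = 2, F (i+1) = F i + F (i-1).
  Index 0 is never used in game states (its value here is a dummy).\<close>
fun F :: "nat \<Rightarrow> nat" where
  "F 0 = 0"
| "F (Suc 0) = 1"
| "F (Suc (Suc 0)) = 2"
| "F (Suc (Suc (Suc i))) = F (Suc (Suc i)) + F (Suc i)"

text \<open>Game states: finite multisets of Fibonacci indices (each index \<ge> 1).\<close>
type_synonym state = "nat multiset"

inductive combine_move :: "nat \<Rightarrow> state \<Rightarrow> state \<Rightarrow> bool" where
  C1: "{#1, 1#} \<subseteq># M \<Longrightarrow> combine_move 1 M (M - {#1, 1#} + {#2#})"
| Ci: "i \<ge> 2 \<Longrightarrow> {#i - 1, i#} \<subseteq># M \<Longrightarrow> combine_move i M (M - {#i - 1, i#} + {#i + 1#})"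

inductive split_move :: "nat \<Rightarrow> state \<Rightarrow> state \<Rightarrow> bool" where
  S2: "{#2, 2#} \<subseteq># M \<Longrightarrow> split_move 2 M (M - {#2, 2#} + {#1, 3#})"
| Si: "i \<ge> 3 \<Longrightarrow> {#i, i#} \<subseteq># M \<Longrightarrow> split_move i M (M - {#i, i#} + {#i - 2, i + 1#})"

definition legal_move :: "state \<Rightarrow> state \<Rightarrow> bool" where
  "legal_move M M' \<longleftrightarrow> (\<exists>i. combine_move i M M' \<or> split_move i M M')"

definition split_or_C1_move :: "state \<Rightarrow> state \<Rightarrow> bool" where
  "split_or_C1_move M M' \<longleftrightarrow> combine_move 1 M M' \<or> (\<exists>i. split_move i M M')"

definition is_zeckendorf :: "nat \<Rightarrow> state \<Rightarrow> bool" where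
  "is_zeckendorf n Z \<longleftrightarrow>
     (\<forall>i \<in># Z. i \<ge> 1) \<and> (\<forall>i. count Z i \<le> 1) \<and>
     (\<forall>i. \<not> (i \<in># Z \<and> Suc i \<in># Z)) \<and>
     (\<Sum>i \<in># Z. F i) = n"

definition start_state :: "nat \<Rightarrow> state" where
  "start_state n = replicate_mset n 1"

end

theory Submission
  imports Defs
begin

definition V :: "nat \<Rightarrow> state \<Rightarrow> nat" where
  "V m s = (\<Sum>i\<in>#filter_mset (\<lambda>i. i < m) s. F i)"

definition Pinv :: "state \<Rightarrow> bool" where
  "Pinv s \<longleftrightarrow> (\<forall>m. (\<exists>i\<in>#s. m \<le> i) \<longrightarrow> F (m - 1) \<le> V m s + 1)"

lemma V_empty[simp]: "V m {#} = 0"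
  by (simp add: V_def)

lemma V_add[simp]: "V m (add_mset x s) = (if x < m then F x else 0) + V m s"
  by (simp add: V_def)

lemma V_plus[simp]: "V m (r + s) = V m r + V m s"
  by (simp add: V_def)

lemma V_mono: "m \<le> m' \<Longrightarrow> V m s \<le> V m' s"
  by (induction s) auto

lemma F123[simp]: "F 1 = 1" "F 2 = 2" "F 3 = 3"
  by (simp_all add: numeral_eq_Suc)

lemma F_rec: "i \<ge> 1 \<Longrightarrow> F (Suc (Suc i)) = F (Suc i) + F i"
  by (cases i) auto

lemma F_small: "m \<le> 2 \<Longrightarrow> F (m - 1) \<le> 1"
  by (cases m; cases "m - 1") auto

lemma P_C1:
  assumes "Pinv (r + {#1, 1#})"
  shows "Pinv (r + {#2#})"
  unfolding Pinv_def
proof (intro allI impI)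
  fix m assume ex: "\<exists>i\<in># r + {#2#}. m \<le> i"
  show "F (m - 1) \<le> V m (r + {#2#}) + 1"
  proof (cases "m \<le> 2")
    case True then show ?thesis using F_small by fastforce
  next
    case False
    then have "\<exists>i\<in># r + {#1,1#}. m \<le> i" using ex by auto
    with assms have "F (m - 1) \<le> V m (r + {#1,1#}) + 1" unfolding Pinv_def by blast
    then show ?thesis using False by simp
  qed
qed

lemma P_S2:
  assumes "Pinv (r + {#2, 2#})"
  shows "Pinv (r + {#1, 3#})"
  unfolding Pinv_def
proof (intro allI impI)
  fix m assume ex: "\<exists>i\<in># r + {#1, 3#}. m \<le> i"
  show "F (m - 1) \<le> V m (r + {#1, 3#}) + 1"
  proof (cases "m \<le> 2")
    case True then show ?thesis using F_small by fastforce
  next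
    case False
    show ?thesis
    proof (cases "m = 3")
      case True then show ?thesis by simp
    next
      case False2: False
      then have "\<exists>i\<in># r + {#2,2#}. m \<le> i" using ex False by auto
      with assms have "F (m - 1) \<le> V m (r + {#2,2#}) + 1" unfolding Pinv_def by blast
      then show ?thesis using False False2 by (simp add: numeral_eq_Suc)
    qed
  qed
qed

lemma P_Si:
  assumes "Pinv (r + {#i, i#})" and i3: "i \<ge> 3"
  shows "Pinv (r + {#i - 2, i + 1#})"
  unfolding Pinv_def
proof (intro allI impI)
  fix m assume ex: "\<exists>j\<in># r + {#i - 2, i + 1#}. m \<le> j"
  have Fi: "F i = F (i - 1) + F (i - 2)"
    using F_rec[of "i - 2"] i3 by (simp add: numeral_eq_Suc Suc_diff_Suc)
  have Fi1: "F (i + 1) = F i + F (i - 1)"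
    using F_rec[of "i - 1"] i3 by (simp add: numeral_eq_Suc Suc_diff_Suc)
  have old: "F (k - 1) \<le> V k (r + {#i, i#}) + 1" if "k \<le> i" for k
    using assms(1) that unfolding Pinv_def by auto
  show "F (m - 1) \<le> V m (r + {#i - 2, i + 1#}) + 1"
  proof (cases "m \<le> i")
    case True
    have "F (m - 1) \<le> V m (r + {#i, i#}) + 1" using old[OF True] .
    also have "\<dots> \<le> V m (r + {#i - 2, i + 1#}) + 1" using True by simp
    finally show ?thesis .
  next
    case False
    show ?thesis
    proof (cases "m = i + 1")
      case True
      have "F (i - 1) \<le> V i r + 1" using old[of i] by simp
      moreover have "V i r \<le> V (i+1) r" by (rule V_mono) simp
      moreover have "V (i + 1) (r + {#i - 2, i + 1#}) = V (i+1) r + F (i - 2)" using i3 by simp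
      ultimately have "F i \<le> V (i + 1) (r + {#i - 2, i + 1#}) + 1" using Fi by linarith
      then show ?thesis using True by simp
    next
      case False2: False
      then have "\<exists>j\<in># r + {#i,i#}. m \<le> j" using ex False by auto
      with assms(1) have "F (m - 1) \<le> V m (r + {#i,i#}) + 1" unfolding Pinv_def by blast
      moreover have "i - 2 < m" "i < m" using False by auto
      ultimately have h: "F (m - 1) \<le> V m (r + {#i,i#}) + 1" "i - 2 < m" "i + 1 < m" using False2 by auto
      have e1: "V m (r + {#i,i#}) = V m r + F i + F i" using h by simp
      have e2: "V m (r + {#i - 2, i + 1#}) = V m r + F (i - 2) + F (i + 1)" using h by simp
      show ?thesis using h(1) e1 e2 Fi Fi1 by linarith
    qed
  qed
qed

lemma P_step:
  assumes "split_or_C1_move s s'" "Pinv s"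
  shows "Pinv s'"
  using assms(1) unfolding split_or_C1_move_def
proof (elim disjE exE)
  assume "combine_move 1 s s'"
  then show ?thesis
  proof cases
    case C1
    then have "s = (s - {#1,1#}) + {#1,1#}" by (metis subset_mset.diff_add)
    then show ?thesis using P_C1[of "s - {#1,1#}"] assms(2) C1 by metis
  qed auto
next
  fix i assume "split_move i s s'"
  then show ?thesis
  proof cases
    case S2
    then have "s = (s - {#2,2#}) + {#2,2#}" by (metis subset_mset.diff_add)
    then show ?thesis using P_S2[of "s - {#2,2#}"] assms(2) S2 by metis
  next
    case Si
    then have "s = (s - {#i,i#}) + {#i,i#}" by (metis subset_mset.diff_add)
    then show ?thesis using P_Si[of "s - {#i,i#}" i] assms(2) Si by metis
  qed
qed

lemma P_start: "Pinv (start_state n)"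
  unfolding Pinv_def start_state_def by auto

lemma F_mono_Suc: "F n \<le> F (Suc n)"
  by (induction n rule: F.induct) auto

lemma V_all: "(\<forall>x\<in>#R. x < m) \<Longrightarrow> V m R = (\<Sum>i\<in>#R. F i)"
  by (induction R) auto

lemma zeck_bound:
  "(\<forall>i\<in>#A. 1 \<le> i \<and> i \<le> K) \<Longrightarrow> (\<forall>i. count A i \<le> 1) \<Longrightarrow>
   (\<forall>i. \<not> (i \<in># A \<and> Suc i \<in># A)) \<Longrightarrow> (\<Sum>i\<in>#A. F i) < F (Suc K)"
proof (induction K arbitrary: A rule: less_induct)
  case (less K)
  show ?case
  proof (cases "K \<in># A")
    case False
    show ?thesis
    proof (cases "K = 0")
      case True
      have "\<not> (\<exists>i. i \<in># A)"
      proof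
        assume "\<exists>i. i \<in># A"
        then obtain i where "i \<in># A" by blast
        then have "1 \<le> i" "i \<le> K" using less.prems(1) by auto
        then show False using True by simp
      qed
      then have "A = {#}" by (simp add: multiset_nonemptyE)
      then show ?thesis using True by simp
    next
      case K0: False
      have "\<forall>i\<in>#A. 1 \<le> i \<and> i \<le> K - 1"
      proof
        fix i assume iA: "i \<in># A"
        then have "i \<noteq> K" using False by auto
        then show "1 \<le> i \<and> i \<le> K - 1" using less.prems(1) iA by fastforce
      qed
      then have "(\<Sum>i\<in>#A. F i) < F (Suc (K - 1))"
        using less.IH[of "K - 1" A] less.prems K0 by auto
      also have "\<dots> \<le> F (Suc K)" using K0 F_mono_Suc[of K] by simp
      finally show ?thesis .
    qed
  next
    case True
    define A' where "A' = A - {#K#}"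
    have A: "A = add_mset K A'" unfolding A'_def using True by simp
    have "count A K = Suc (count A' K)" using A by simp
    then have "count A' K = 0" using less.prems(2)[rule_format, of K] by simp
    then have nK: "K \<notin># A'" by (simp add: not_in_iff)
    have K1: "K \<ge> 1" using less.prems(1) True by auto
    show ?thesis
    proof (cases "K = 1")
      case True
      have "set_mset A' = {}"
      proof (rule ccontr)
        assume "set_mset A' \<noteq> {}"
        then obtain x where x: "x \<in># A'" by blast
        then have "x \<in># A" using A by simp
        then have "x = 1" using less.prems(1) True by fastforce
        then show False using x nK True by simp
      qed
      then have "A' = {#}" by simp
      then show ?thesis using A True by simp
    next
      case False
      then have K2: "K \<ge> 2" using K1 by simp
      have sk: "Suc (K - 1) = K" using K2 by simp
      have "\<not> (K - 1 \<in># A \<and> Suc (K - 1) \<in># A)" using less.prems(3) by blast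
      then have nK1: "K - 1 \<notin># A'" using A sk by auto
      have bnd: "\<forall>i\<in>#A'. 1 \<le> i \<and> i \<le> K - 2"
      proof
        fix i assume iA: "i \<in># A'"
        then have "i \<noteq> K" "i \<noteq> K - 1" using nK nK1 by auto
        moreover have "1 \<le> i \<and> i \<le> K" using less.prems(1) iA A by simp
        ultimately show "1 \<le> i \<and> i \<le> K - 2" by linarith
      qed
      have c: "\<forall>i. count A' i \<le> 1"
      proof
        fix i have "count A' i \<le> count A i" using A by simp
        then show "count A' i \<le> 1" using less.prems(2) le_trans by blast
      qed
      have nc: "\<forall>i. \<not> (i \<in># A' \<and> Suc i \<in># A')" using less.prems(3) A by auto
      have "(\<Sum>i\<in>#A'. F i) < F (Suc (K - 2))"
        using less.IH[of "K - 2" A'] bnd c nc K2 by auto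
      moreover have "F (Suc K) = F K + F (K - 1)"
        using F_rec[of "K - 1"] K2 by (simp add: Suc_diff_Suc numeral_eq_Suc)
      moreover have "Suc (K - 2) = K - 1" using K2 by simp
      ultimately show ?thesis using A by simp
    qed
  qed
qed

theorem lemma3p2:
  fixes n :: nat and Z :: state
  assumes "n \<ge> 1"
    and "is_zeckendorf n Z"
    and "split_or_C1_move\<^sup>*\<^sup>* (start_state n) Z"
  shows "\<exists>k \<ge> 2. n = F k - 1"
proof -
  have PZ: "Pinv Z" using assms(3)
    by (induction rule: rtranclp_induct) (auto intro: P_step P_start)
  have z1: "\<forall>i\<in>#Z. i \<ge> 1" and z2: "\<forall>i. count Z i \<le> 1"
    and z3: "\<forall>i. \<not> (i \<in># Z \<and> Suc i \<in># Z)" and zs: "(\<Sum>i\<in>#Z. F i) = n"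
    using assms(2) unfolding is_zeckendorf_def by auto
  have "Z \<noteq> {#}" using zs assms(1) by auto
  define M where "M = Max (set_mset Z)"
  have MZ: "M \<in># Z" unfolding M_def using \<open>Z \<noteq> {#}\<close> by simp
  have Mmax: "\<forall>x\<in>#Z. x \<le> M" unfolding M_def by simp
  define R where "R = Z - {#M#}"
  have ZR: "Z = add_mset M R" unfolding R_def using MZ by simp
  have "count Z M = Suc (count R M)" using ZR by simp
  then have "count R M = 0" using z2[rule_format, of M] by simp
  then have nM: "M \<notin># R" by (simp add: not_in_iff)
  have Rlt: "\<forall>x\<in>#R. 1 \<le> x \<and> x < M"
  proof
    fix x assume xR: "x \<in># R"
    then have "x \<in># Z" using ZR by simp
    then have "1 \<le> x" "x \<le> M" using z1 Mmax by auto
    moreover have "x \<noteq> M" using xR nM by auto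
    ultimately show "1 \<le> x \<and> x < M" by simp
  qed
  have M1: "M \<ge> 1" using z1 MZ by auto
  have "F (M - 1) \<le> V M Z + 1" using PZ MZ unfolding Pinv_def by auto
  moreover have "V M Z = (\<Sum>i\<in>#R. F i)" using ZR V_all[of R M] Rlt by simp
  ultimately have lo: "F (M - 1) \<le> (\<Sum>i\<in>#R. F i) + 1" by simp
  have nsum: "n = F M + (\<Sum>i\<in>#R. F i)" using zs ZR by simp
  show ?thesis
  proof (cases "M = 1")
    case True
    have "\<not> (\<exists>i. i \<in># R)"
    proof
      assume "\<exists>i. i \<in># R"
      then obtain i where "i \<in># R" by blast
      then have "1 \<le> i" "i < M" using Rlt by auto
      then show False using True by simp
    qed
    then have "R = {#}" by (simp add: multiset_nonemptyE)
    then have "n = F 2 - 1" using nsum True by simp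
    then show ?thesis by blast
  next
    case False
    then have M2: "M \<ge> 2" using M1 by simp
    have sk: "Suc (M - 1) = M" using M2 by simp
    have "\<not> (M - 1 \<in># Z \<and> Suc (M - 1) \<in># Z)" using z3 by blast
    then have nM1: "M - 1 \<notin># R" using ZR sk by auto
    have bnd: "\<forall>i\<in>#R. 1 \<le> i \<and> i \<le> M - 2"
    proof
      fix i assume iR: "i \<in># R"
      then have "i \<noteq> M - 1" using nM1 by auto
      moreover have "1 \<le> i \<and> i < M" using Rlt iR by blast
      ultimately show "1 \<le> i \<and> i \<le> M - 2" by linarith
    qed
    have c: "\<forall>i. count R i \<le> 1"
    proof
      fix i have "count R i \<le> count Z i" using ZR by simp
      then show "count R i \<le> 1" using z2 le_trans by blast
    qed
    have nc: "\<forall>i. \<not> (i \<in># R \<and> Suc i \<in># R)" using z3 ZR by auto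
    have "(\<Sum>i\<in>#R. F i) < F (Suc (M - 2))" using zeck_bound[OF bnd c nc] .
    moreover have "Suc (M - 2) = M - 1" using M2 by simp
    moreover have "F (M + 1) = F M + F (M - 1)"
      using F_rec[of "M - 1"] M2 by (simp add: Suc_diff_Suc numeral_eq_Suc)
    ultimately have "n = F (M + 1) - 1" using lo nsum by simp
    moreover have "M + 1 \<ge> 2" using M1 by simp
    ultimately show ?thesis by blast
  qed
qed

end
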